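(* The Krichever genus $kv\colon\varOmega^U_*\to R_*$, i.e. the ring homomorphism classifying the formal group law $F_b$, induces an isomorphism of graded abelian groups $\varOmega^U_{2i}\to R_{2i}$ for all $2i<10$.
   Context: $R_*=\mathbb{Z}[a,c_j,d_k:j\ge2,k\ge1]/J$ with $\deg a=2$, $\deg c_j=2j$, $\deg d_k=2(k+2)$, and $F_b(u_1,u_2)=u_1c(u_2)+u_2c(u_1)-au_1u_2-\frac{d(u_1)-d(u_2)}{u_1c(u_2)-u_2c(u_1)}u_1^2u_2^2$, where $c(u)=1+\sum_{j\ge2}c_ju^j$, $d(u)=\sum_{k\ge1}d_ku^k$, and $J$ is the ideal of associativity relations for $F_b$. By Quillen's theorem $\varOmega^U_*$ is the Lazard ring, so $F_b$ is classified by a unique graded ring homomorphism $\varOmega^U_*\to R_*$. *)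

theory Defs
  imports "HOL-Library.Poly_Mapping" "HOL-Computational_Algebra.Formal_Power_Series"
begin

type_synonym 'v mpoly = "('v \<Rightarrow>\<^sub>0 nat) \<Rightarrow>\<^sub>0 int"

definition Var :: "'v \<Rightarrow> 'v mpoly" where
  "Var v = Poly_Mapping.single (Poly_Mapping.single v 1) 1"

definition subst :: "('v \<Rightarrow> 'a::comm_ring_1) \<Rightarrow> 'v mpoly \<Rightarrow> 'a" where
  "subst \<sigma> p = (\<Sum>m\<in>Poly_Mapping.keys p.
      of_int (Poly_Mapping.lookup p m) * (\<Prod>v\<in>Poly_Mapping.keys m. \<sigma> v ^ Poly_Mapping.lookup m v))"

text \<open>Homogeneity w.r.t. a weight of the variables (weight n = topological degree 2n).\<close>
definition homog :: "('v \<Rightarrow> nat) \<Rightarrow> nat \<Rightarrow> 'v mpoly \<Rightarrow> bool" where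
  "homog wt n p \<longleftrightarrow> (\<forall>m\<in>Poly_Mapping.keys p.
      (\<Sum>v\<in>Poly_Mapping.keys m. Poly_Mapping.lookup m v * wt v) = n)"

definition gen_ideal :: "'a::comm_ring_1 set \<Rightarrow> 'a set" where
  "gen_ideal S = {x. \<exists>F g. finite F \<and> F \<subseteq> S \<and> x = (\<Sum>s\<in>F. g s * s)}"

text \<open>Two-variable series: element S of 'r fps fps, coefficient of u1^i u2^j is
  fps_nth (fps_nth S i) j. Three-variable series: 'r fps fps fps similarly.\<close>

definition coeff2 :: "'r fps fps \<Rightarrow> nat \<Rightarrow> nat \<Rightarrow> 'r" where
  "coeff2 S i j = fps_nth (fps_nth S i) j"

definition coeff3 :: "'r fps fps fps \<Rightarrow> nat \<Rightarrow> nat \<Rightarrow> nat \<Rightarrow> 'r" where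
  "coeff3 S p q r = fps_nth (fps_nth (fps_nth S p) q) r"

definition U3 :: "'r::comm_ring_1 fps fps fps" where "U3 = fps_X"
definition V3 :: "'r::comm_ring_1 fps fps fps" where "V3 = fps_const fps_X"
definition W3 :: "'r::comm_ring_1 fps fps fps" where "W3 = fps_const (fps_const fps_X)"

definition const3 :: "'r::comm_ring_1 \<Rightarrow> 'r fps fps fps" where
  "const3 r = fps_const (fps_const (fps_const r))"

text \<open>Truncated substitution of two 3-variable series G, H (without constant term)
  into a 2-variable series with coefficient function f (f 0 0 = 0). All terms of total
  degree at most N of the genuine composite F(G,H) are exact.\<close>
definition ev_trunc :: "nat \<Rightarrow> (nat \<Rightarrow> nat \<Rightarrow> 'r::comm_ring_1) \<Rightarrow> 'r fps fps fps \<Rightarrow> 'r fps fps fps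
    \<Rightarrow> 'r fps fps fps" where
  "ev_trunc N f G H = (\<Sum>i\<le>N. \<Sum>j\<le>N. const3 (f i j) * G ^ i * H ^ j)"

text \<open>Coefficient of u^p v^q w^r in F(F(u,v),w) - F(u,F(v,w)).\<close>
definition assoc_rel :: "(nat \<Rightarrow> nat \<Rightarrow> 'r::comm_ring_1) \<Rightarrow> nat \<Rightarrow> nat \<Rightarrow> nat \<Rightarrow> 'r" where
  "assoc_rel f p q r =
     (let N = p + q + r in
       coeff3 (ev_trunc N f (ev_trunc N f U3 V3) W3) p q r
     - coeff3 (ev_trunc N f U3 (ev_trunc N f V3 W3)) p q r)"

definition assoc_ideal :: "(nat \<Rightarrow> nat \<Rightarrow> 'r::comm_ring_1) \<Rightarrow> 'r set" where
  "assoc_ideal f = gen_ideal (range (\<lambda>(p, q, r). assoc_rel f p q r))"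

text \<open>Variables of R: A = a (deg 2), C n = c_(n+2) (deg 2(n+2)), D n = d_(n+1) (deg 2(n+3)).\<close>
datatype rvar = A | C nat | D nat

fun wtR :: "rvar \<Rightarrow> nat" where
  "wtR A = 1"
| "wtR (C n) = n + 2"
| "wtR (D n) = n + 3"

definition c_fps :: "rvar mpoly fps" where
  "c_fps = Abs_fps (\<lambda>n. if n = 0 then 1 else if n = 1 then 0 else Var (C (n - 2)))"

definition d_fps :: "rvar mpoly fps" where
  "d_fps = Abs_fps (\<lambda>n. if n = 0 then 0 else Var (D (n - 1)))"

definition in_u1 :: "'r::comm_ring_1 fps \<Rightarrow> 'r fps fps" where
  "in_u1 f = Abs_fps (\<lambda>i. fps_const (fps_nth f i))"

definition in_u2 :: "'r::comm_ring_1 fps \<Rightarrow> 'r fps fps" where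
  "in_u2 f = fps_const f"

definition X1 :: "'r::comm_ring_1 fps fps" where "X1 = fps_X"
definition X2 :: "'r::comm_ring_1 fps fps" where "X2 = fps_const fps_X"

text \<open>The power series (d(u1)-d(u2))/(u1 c(u2) - u2 c(u1)) (the quotient exists and is unique).\<close>
definition Qb :: "rvar mpoly fps fps" where
  "Qb = (THE Q. Q * (X1 * in_u2 c_fps - X2 * in_u1 c_fps) = in_u1 d_fps - in_u2 d_fps)"

definition Fb :: "rvar mpoly fps fps" where
  "Fb = X1 * in_u2 c_fps + X2 * in_u1 c_fps - fps_const (fps_const (Var A)) * X1 * X2
        - Qb * X1 ^ 2 * X2 ^ 2"

definition b :: "nat \<Rightarrow> nat \<Rightarrow> rvar mpoly" where
  "b i j = coeff2 Fb i j"

text \<open>J = ideal of associativity relations of F_b; R_* = Z[a,c_j,d_k]/J.\<close>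
definition J :: "rvar mpoly set" where
  "J = assoc_ideal b"

section \<open>The Lazard ring (= Omega^U_* by Quillen)\<close>

text \<open>Variable (i,j) stands for x_(i+1,j+1), the coefficient of u^(i+1) v^(j+1) of the
  universal formal group law; its weight is i+j+1 (topological degree 2(i+j+1)).\<close>
fun wtL :: "nat \<times> nat \<Rightarrow> nat" where
  "wtL (i, j) = i + j + 1"

definition gL :: "nat \<Rightarrow> nat \<Rightarrow> (nat \<times> nat) mpoly" where
  "gL i j = (if (i, j) = (1, 0) \<or> (i, j) = (0, 1) then 1
             else if 1 \<le> i \<and> 1 \<le> j then Var (i - 1, j - 1) else 0)"

definition I_Laz :: "(nat \<times> nat) mpoly set" where
  "I_Laz = gen_ideal (range (\<lambda>(p, q, r). assoc_rel gL p q r)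
                      \<union> {Var (i, j) - Var (j, i) | i j. True})"

text \<open>The Krichever genus kv on the level of representatives: x_(i,j) maps to b_(i,j).\<close>
definition kv :: "(nat \<times> nat) mpoly \<Rightarrow> rvar mpoly" where
  "kv = subst (\<lambda>(i, j). b (i + 1) (j + 1))"

text \<open>kv induces a bijection Omega^U_(2n) = L_n/(I cap L_n) -> R_(2n) = P_n/(J cap P_n):
  surjectivity and injectivity on the degree-n homogeneous parts.\<close>
definition kv_iso_in_degree :: "nat \<Rightarrow> bool" where
  "kv_iso_in_degree n \<longleftrightarrow>
     (\<forall>q. homog wtR n q \<longrightarrow> (\<exists>p. homog wtL n p \<and> kv p - q \<in> J))
   \<and> (\<forall>p. homog wtL n p \<longrightarrow> kv p \<in> J \<longrightarrow> p \<in> I_Laz)"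

end

theory Submission
  imports Defs
begin

unbundle fps_syntax

locale rh =
  fixes h :: "'a::comm_ring_1 \<Rightarrow> 'b::comm_ring_1"
  assumes h_add: "h (x + y) = h x + h y"
    and h_mult: "h (x * y) = h x * h y"
    and h_one: "h 1 = 1"
begin
lemma h_zero[simp]: "h 0 = 0"
  using h_add[of 0 0] by simp
lemma h_uminus: "h (- x) = - h x"
  using h_add[of x "-x"] by (simp add: eq_neg_iff_add_eq_0 add.commute)
lemma h_diff: "h (x - y) = h x - h y"
  using h_add[of x "-y"] by (simp add: h_uminus)
lemma h_power: "h (x ^ n) = h x ^ n"
  by (induction n) (simp_all add: h_one h_mult)
lemma h_sum: "h (sum f AA) = sum (\<lambda>x. h (f x)) AA"
  by (induction AA rule: infinite_finite_induct) (simp_all add: h_add)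
lemma h_prod: "h (prod f AA) = prod (\<lambda>x. h (f x)) AA"
  by (induction AA rule: infinite_finite_induct) (simp_all add: h_mult h_one)
lemma h_of_nat: "h (of_nat n) = of_nat n"
  by (induction n) (simp_all add: h_add h_one)
lemma h_of_int: "h (of_int k) = of_int k"
  by (cases k rule: int_cases) (simp_all add: h_of_nat h_uminus h_diff h_one)
lemmas h_simps = h_add h_mult h_one h_uminus h_diff h_power h_sum h_prod h_of_nat h_of_int
end

lemma rh_id: "rh (\<lambda>x. x)" by unfold_locales auto

lemma rh_comp: "rh f \<Longrightarrow> rh g \<Longrightarrow> rh (\<lambda>x. g (f x))"
  unfolding rh_def by auto

lemma rh_fps_const: "rh fps_const"
  by unfold_locales (simp_all)

lemma gen_ideal_0: "0 \<in> gen_ideal S"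
  unfolding gen_ideal_def by (rule CollectI, rule exI[of _ "{}"]) auto

lemma gen_ideal_gen: "s \<in> S \<Longrightarrow> s \<in> gen_ideal S"
  unfolding gen_ideal_def
  by (rule CollectI, rule exI[of _ "{s}"], rule exI[of _ "\<lambda>_. 1"]) auto

lemma gen_ideal_add:
  assumes "x \<in> gen_ideal S" "y \<in> gen_ideal S" shows "x + y \<in> gen_ideal S"
proof -
  from assms obtain F g G k where F: "finite F" "F \<subseteq> S" "x = (\<Sum>s\<in>F. g s * s)"
    and G: "finite G" "G \<subseteq> S" "y = (\<Sum>s\<in>G. k s * s)"
    unfolding gen_ideal_def by blast
  let ?g = "\<lambda>s. (if s \<in> F then g s else 0) + (if s \<in> G then k s else 0)"
  have "x = (\<Sum>s\<in>F \<union> G. (if s \<in> F then g s else 0) * s)"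
    using F G by (subst sum.mono_neutral_cong_right[of "F \<union> G" F]) auto
  moreover have "y = (\<Sum>s\<in>F \<union> G. (if s \<in> G then k s else 0) * s)"
    using F G by (subst sum.mono_neutral_cong_right[of "F \<union> G" G]) auto
  ultimately have "x + y = (\<Sum>s\<in>F \<union> G. ?g s * s)"
    by (simp add: sum.distrib[symmetric] distrib_right)
  then show ?thesis unfolding gen_ideal_def using F G
    by (intro CollectI exI[of _ "F \<union> G"] exI[of _ ?g]) auto
qed

lemma gen_ideal_mult: "x \<in> gen_ideal S \<Longrightarrow> r * x \<in> gen_ideal S"
proof -
  assume "x \<in> gen_ideal S"
  then obtain F g where F: "finite F" "F \<subseteq> S" "x = (\<Sum>s\<in>F. g s * s)"
    unfolding gen_ideal_def by blast
  then have "r * x = (\<Sum>s\<in>F. (r * g s) * s)" by (simp add: sum_distrib_left mult.assoc)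
  then show ?thesis unfolding gen_ideal_def using F
    by (intro CollectI exI[of _ F] exI[of _ "\<lambda>s. r * g s"]) auto
qed

lemma gen_ideal_mult_right: "x \<in> gen_ideal S \<Longrightarrow> x * r \<in> gen_ideal S"
  using gen_ideal_mult[of x S r] by (simp add: mult.commute)

lemma gen_ideal_uminus: "x \<in> gen_ideal S \<Longrightarrow> - x \<in> gen_ideal S"
  using gen_ideal_mult[of x S "-1"] by simp

lemma gen_ideal_diff: "x \<in> gen_ideal S \<Longrightarrow> y \<in> gen_ideal S \<Longrightarrow> x - y \<in> gen_ideal S"
  using gen_ideal_add[of x S "-y"] gen_ideal_uminus[of y S] by simp

lemma gen_ideal_sum: "(\<And>i. i \<in> AA \<Longrightarrow> f i \<in> gen_ideal S) \<Longrightarrow> sum f AA \<in> gen_ideal S"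
  by (induction AA rule: infinite_finite_induct) (auto intro: gen_ideal_0 gen_ideal_add)

lemma gen_ideal_cong_mult:
  assumes "x - x' \<in> gen_ideal S" "y - y' \<in> gen_ideal S"
  shows "x * y - x' * y' \<in> gen_ideal S"
proof -
  have "x * y - x' * y' = (x - x') * y + x' * (y - y')" by (simp add: algebra_simps)
  then show ?thesis using assms by (simp add: gen_ideal_add gen_ideal_mult gen_ideal_mult_right)
qed

lemma gen_ideal_cong_prod:
  assumes "\<And>i. i \<in> AA \<Longrightarrow> f i - g i \<in> gen_ideal S"
  shows "prod f AA - prod g AA \<in> gen_ideal S"
  using assms
proof (induction AA rule: infinite_finite_induct)
  case (infinite A) then show ?case by (simp add: gen_ideal_0)
next
  case empty then show ?case by (simp add: gen_ideal_0)
next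
  case (insert x F) then show ?case by (simp add: gen_ideal_cong_mult)
qed

lemma gen_ideal_cong_power:
  assumes "x - y \<in> gen_ideal S" shows "x ^ n - y ^ n \<in> gen_ideal S"
  by (induction n) (simp_all add: gen_ideal_0 gen_ideal_cong_mult assms)

section \<open>Substitution\<close>

definition mon :: "('v \<Rightarrow> 'a::comm_ring_1) \<Rightarrow> ('v \<Rightarrow>\<^sub>0 nat) \<Rightarrow> 'a" where
  "mon \<sigma> m = (\<Prod>v\<in>Poly_Mapping.keys m. \<sigma> v ^ Poly_Mapping.lookup m v)"

lemma subst_mon: "subst \<sigma> p = (\<Sum>m\<in>Poly_Mapping.keys p. of_int (Poly_Mapping.lookup p m) * mon \<sigma> m)"
  unfolding subst_def mon_def ..

lemma subst_superset:
  assumes "finite S" "Poly_Mapping.keys p \<subseteq> S"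
  shows "subst \<sigma> p = (\<Sum>m\<in>S. of_int (Poly_Mapping.lookup p m) * mon \<sigma> m)"
  unfolding subst_mon using assms
  by (intro sum.mono_neutral_cong_left) (auto simp: in_keys_iff)

lemma mon_superset:
  assumes "finite S" "Poly_Mapping.keys m \<subseteq> S"
  shows "mon \<sigma> m = (\<Prod>v\<in>S. \<sigma> v ^ Poly_Mapping.lookup m v)"
  unfolding mon_def using assms
  by (intro prod.mono_neutral_cong_left) (auto simp: in_keys_iff)

lemma mon_add: "mon \<sigma> (m1 + m2) = mon \<sigma> m1 * mon \<sigma> m2"
proof -
  let ?S = "Poly_Mapping.keys m1 \<union> Poly_Mapping.keys m2"
  have k: "Poly_Mapping.keys (m1 + m2) \<subseteq> ?S" by (rule keys_add)
  show ?thesis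
    by (simp add: mon_superset[OF _ k] mon_superset[of ?S m1] mon_superset[of ?S m2]
        lookup_add power_add prod.distrib)
qed

lemma mon_zero: "mon \<sigma> 0 = 1" by (simp add: mon_def)

lemma subst_add: "subst \<sigma> (p + q) = subst \<sigma> p + subst \<sigma> q"
proof -
  let ?S = "Poly_Mapping.keys p \<union> Poly_Mapping.keys q"
  have k: "Poly_Mapping.keys (p + q) \<subseteq> ?S" by (rule keys_add)
  show ?thesis
    by (simp add: subst_superset[OF _ k] subst_superset[of ?S p] subst_superset[of ?S q]
        lookup_add sum.distrib distrib_right)
qed

lemma subst_zero: "subst \<sigma> 0 = 0" by (simp add: subst_def)

lemma subst_sum: "subst \<sigma> (sum f AA) = (\<Sum>x\<in>AA. subst \<sigma> (f x))"
  by (induction AA rule: infinite_finite_induct) (simp_all add: subst_zero subst_add)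

lemma subst_single: "subst \<sigma> (Poly_Mapping.single m c) = of_int c * mon \<sigma> m"
  by (cases "c = 0") (simp_all add: subst_def mon_def)

lemma poly_sum_single: "p = (\<Sum>m\<in>Poly_Mapping.keys p. Poly_Mapping.single m (Poly_Mapping.lookup p m))"
proof (rule poly_mapping_eqI)
  fix k
  show "Poly_Mapping.lookup p k = Poly_Mapping.lookup (\<Sum>m\<in>Poly_Mapping.keys p. Poly_Mapping.single m (Poly_Mapping.lookup p m)) k"
    by (cases "k \<in> Poly_Mapping.keys p")
       (simp_all add: lookup_sum lookup_single when_def in_keys_iff sum.delta)
qed

lemma subst_mult: "subst \<sigma> (p * q) = subst \<sigma> p * subst \<sigma> q"
proof -
  have "p * q = (\<Sum>m\<in>Poly_Mapping.keys p. \<Sum>n\<in>Poly_Mapping.keys q.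
      Poly_Mapping.single m (Poly_Mapping.lookup p m) * Poly_Mapping.single n (Poly_Mapping.lookup q n))"
    by (subst poly_sum_single[of p], subst poly_sum_single[of q])
       (simp add: sum_distrib_left sum_distrib_right sum.swap[of _ "Poly_Mapping.keys q"])
  then have "subst \<sigma> (p * q) = (\<Sum>m\<in>Poly_Mapping.keys p. \<Sum>n\<in>Poly_Mapping.keys q.
      (of_int (Poly_Mapping.lookup p m) * mon \<sigma> m) * (of_int (Poly_Mapping.lookup q n) * mon \<sigma> n))"
    by (simp add: subst_sum mult_single subst_single mon_add mult_ac)
  also have "\<dots> = subst \<sigma> p * subst \<sigma> q"
    by (simp add: subst_mon sum_distrib_left sum_distrib_right sum.swap[of _ "Poly_Mapping.keys q"])
  finally show ?thesis .
qed

lemma subst_one: "subst \<sigma> 1 = 1"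
proof -
  have "(1::'v mpoly) = Poly_Mapping.single 0 1" by simp
  then show ?thesis by (metis subst_single mon_zero of_int_1 mult_1)
qed

lemma rh_subst: "rh (subst \<sigma>)"
  by unfold_locales (simp_all add: subst_add subst_mult subst_one)

lemma mon_single: "mon \<sigma> (Poly_Mapping.single v k) = \<sigma> v ^ k"
  by (cases "k = 0") (simp_all add: mon_def)

lemma subst_Var: "subst \<sigma> (Var v) = \<sigma> v"
  by (simp add: Var_def subst_single mon_single)

lemma prod_single_one:
  "(\<Prod>v\<in>S. Poly_Mapping.single (g v) (1::int)) = Poly_Mapping.single (\<Sum>v\<in>S. g v) 1"
  by (induction S rule: infinite_finite_induct) (simp_all add: mult_single)

lemma Var_power: "(Var v :: 'v mpoly) ^ k = Poly_Mapping.single (Poly_Mapping.single v k) 1"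
proof (induction k)
  case 0 then show ?case by simp
next
  case (Suc k)
  have "Poly_Mapping.single v 1 + Poly_Mapping.single v k = Poly_Mapping.single v (Suc k)"
    by (metis single_add plus_1_eq_Suc)
  then show ?case using Suc by (simp add: Var_def mult_single)
qed

lemma mon_Var: "mon Var m = Poly_Mapping.single m 1"
proof -
  have "mon Var m = (\<Prod>v\<in>Poly_Mapping.keys m. Poly_Mapping.single (Poly_Mapping.single v (Poly_Mapping.lookup m v)) (1::int))"
    by (simp add: mon_def Var_power)
  also have "\<dots> = Poly_Mapping.single (\<Sum>v\<in>Poly_Mapping.keys m. Poly_Mapping.single v (Poly_Mapping.lookup m v)) 1"
    by (rule prod_single_one)
  also have "(\<Sum>v\<in>Poly_Mapping.keys m. Poly_Mapping.single v (Poly_Mapping.lookup m v)) = m"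
    by (rule poly_sum_single[symmetric])
  finally show ?thesis .
qed

lemma subst_Var_id: "subst Var p = p"
proof -
  have "subst Var p = (\<Sum>m\<in>Poly_Mapping.keys p. of_int (Poly_Mapping.lookup p m) * Poly_Mapping.single m 1)"
    by (simp add: subst_mon mon_Var)
  also have "\<dots> = (\<Sum>m\<in>Poly_Mapping.keys p. Poly_Mapping.single m (Poly_Mapping.lookup p m))"
    by (intro sum.cong refl) (simp add: mult_single flip: single_of_int)
  also have "\<dots> = p" by (rule poly_sum_single[symmetric])
  finally show ?thesis .
qed

lemma (in rh) h_subst: "h (subst \<sigma> p) = subst (\<lambda>v. h (\<sigma> v)) p"
  by (simp add: subst_def h_simps)

lemma subst_cong:
  assumes "\<And>m v. m \<in> Poly_Mapping.keys p \<Longrightarrow> v \<in> Poly_Mapping.keys m \<Longrightarrow> \<sigma>1 v = \<sigma>2 v"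
  shows "subst \<sigma>1 p = subst \<sigma>2 p"
  unfolding subst_def using assms by (intro sum.cong refl arg_cong2[where f=times] prod.cong) auto

lemma subst_cong_ideal:
  assumes "\<And>m v. m \<in> Poly_Mapping.keys p \<Longrightarrow> v \<in> Poly_Mapping.keys m \<Longrightarrow> \<sigma>1 v - \<sigma>2 v \<in> gen_ideal S"
  shows "subst \<sigma>1 p - subst \<sigma>2 p \<in> gen_ideal S"
proof -
  have "subst \<sigma>1 p - subst \<sigma>2 p = (\<Sum>m\<in>Poly_Mapping.keys p. of_int (Poly_Mapping.lookup p m) *
     (mon \<sigma>1 m - mon \<sigma>2 m))"
    by (simp add: subst_mon sum_subtractf[symmetric] right_diff_distrib)
  also have "\<dots> \<in> gen_ideal S"
    unfolding mon_def using assms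
    by (intro gen_ideal_sum gen_ideal_mult gen_ideal_cong_prod gen_ideal_cong_power) auto
  finally show ?thesis .
qed

lemma homog_var_le:
  assumes "homog wt n p" "m \<in> Poly_Mapping.keys p" "v \<in> Poly_Mapping.keys m"
  shows "wt v \<le> n"
proof -
  have "Poly_Mapping.lookup m v * wt v \<le> (\<Sum>w\<in>Poly_Mapping.keys m. Poly_Mapping.lookup m w * wt w)"
    using assms(3) by (intro member_le_sum) auto
  moreover have one: "1 \<le> Poly_Mapping.lookup m v" using assms(3) by (simp add: in_keys_iff)
  ultimately have "wt v \<le> (\<Sum>w\<in>Poly_Mapping.keys m. Poly_Mapping.lookup m w * wt w)"
    using mult_le_mono1[OF one, of "wt v"] by linarith
  with assms(1,2) show ?thesis unfolding homog_def by auto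
qed

lemma subst_scaled_homog:
  fixes \<beta> :: "'v \<Rightarrow> 'a::comm_ring_1"
  assumes "homog wt n p"
  shows "subst (\<lambda>v. fps_const (\<beta> v) * fps_X ^ wt v) p = fps_const (subst \<beta> p) * fps_X ^ n"
proof -
  have "\<And>m. m \<in> Poly_Mapping.keys p \<Longrightarrow> mon (\<lambda>v. fps_const (\<beta> v) * fps_X ^ wt v) m = fps_const (mon \<beta> m) * fps_X ^ n"
  proof -
    fix m assume m: "m \<in> Poly_Mapping.keys p"
    have "mon (\<lambda>v. fps_const (\<beta> v) * fps_X ^ wt v) m =
       (\<Prod>v\<in>Poly_Mapping.keys m. fps_const (\<beta> v ^ Poly_Mapping.lookup m v) * fps_X ^ (Poly_Mapping.lookup m v * wt v))"
      unfolding mon_def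
      by (intro prod.cong refl) (simp add: power_mult_distrib mult.commute flip: power_mult)
    also have "\<dots> = fps_const (mon \<beta> m) * fps_X ^ (\<Sum>v\<in>Poly_Mapping.keys m. Poly_Mapping.lookup m v * wt v)"
      by (simp add: prod.distrib mon_def power_sum rh.h_prod[OF rh_fps_const, symmetric])
    also have "(\<Sum>v\<in>Poly_Mapping.keys m. Poly_Mapping.lookup m v * wt v) = n"
      using assms m unfolding homog_def by auto
    finally show "mon (\<lambda>v. fps_const (\<beta> v) * fps_X ^ wt v) m = fps_const (mon \<beta> m) * fps_X ^ n" .
  qed
  then have "subst (\<lambda>v. fps_const (\<beta> v) * fps_X ^ wt v) p =
     (\<Sum>m\<in>Poly_Mapping.keys p. of_int (Poly_Mapping.lookup p m) * (fps_const (mon \<beta> m) * fps_X ^ n))"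
    by (simp add: subst_mon)
  also have "\<dots> = fps_const (subst \<beta> p) * fps_X ^ n"
    by (simp add: subst_mon rh.h_sum[OF rh_fps_const] sum_distrib_right fps_of_int[symmetric] mult.assoc
        flip: fps_const_mult)
  finally show ?thesis .
qed

definition sc :: "'b::comm_ring_1 \<Rightarrow> ('a::comm_ring_1 \<Rightarrow> 'b) \<Rightarrow> 'a fps \<Rightarrow> 'b fps" where
  "sc c h f = Abs_fps (\<lambda>n. h (f $ n) * c ^ n)"

lemma sc_nth[simp]: "sc c h f $ n = h (f $ n) * c ^ n"
  by (simp add: sc_def)

lemma rh_sc: assumes "rh h" shows "rh (sc c h)"
proof
  interpret rh h by fact
  fix x y :: "'a fps"
  show "sc c h (x + y) = sc c h x + sc c h y"
    by (rule fps_ext) (simp add: h_add distrib_right)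
  show "sc c h (x * y) = sc c h x * sc c h y"
  proof (rule fps_ext)
    fix n
    have "sc c h (x * y) $ n = (\<Sum>i=0..n. h (x $ i) * h (y $ (n - i)) * c ^ n)"
      by (simp add: fps_mult_nth h_sum h_mult sum_distrib_right)
    also have "\<dots> = (\<Sum>i=0..n. (h (x $ i) * c ^ i) * (h (y $ (n - i)) * c ^ (n - i)))"
    proof (intro sum.cong refl)
      fix i assume "i \<in> {0..n}"
      then have "c ^ n = c ^ i * c ^ (n - i)" by (simp flip: power_add)
      then show "h (x $ i) * h (y $ (n - i)) * c ^ n = (h (x $ i) * c ^ i) * (h (y $ (n - i)) * c ^ (n - i))"
        by (simp add: algebra_simps)
    qed
    also have "\<dots> = (sc c h x * sc c h y) $ n" by (simp add: fps_mult_nth)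
    finally show "sc c h (x * y) $ n = (sc c h x * sc c h y) $ n" .
  qed
  show "sc c h 1 = 1"
    by (rule fps_ext) (simp add: h_one)
qed

lemma sc_const: "rh h \<Longrightarrow> sc c h (fps_const x) = fps_const (h x)"
  by (rule fps_ext) (simp add: rh.h_zero)

definition H3 :: "'b \<Rightarrow> 'b \<Rightarrow> 'b \<Rightarrow> ('a::comm_ring_1 \<Rightarrow> 'b::comm_ring_1)
     \<Rightarrow> 'a fps fps fps \<Rightarrow> 'b fps fps fps" where
  "H3 c0 c1 c2 h = sc (fps_const (fps_const c2)) (sc (fps_const c1) (sc c0 h))"

lemma rh_H3: "rh h \<Longrightarrow> rh (H3 c0 c1 c2 h)"
  unfolding H3_def by (intro rh_sc)

lemma coeff3_H3: "coeff3 (H3 c0 c1 c2 h S) p q r = h (coeff3 S p q r) * c0 ^ r * c1 ^ q * c2 ^ p"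
  by (simp add: H3_def coeff3_def fps_const_power)

lemma ext3: "(\<And>p q r. coeff3 S p q r = coeff3 T p q r) \<Longrightarrow> S = T"
  unfolding coeff3_def by (intro fps_ext) auto

lemma coeff3_add[simp]: "coeff3 (S + T) p q r = coeff3 S p q r + coeff3 T p q r"
  by (simp add: coeff3_def)
lemma coeff3_diff[simp]: "coeff3 (S - T) p q r = coeff3 S p q r - coeff3 T p q r"
  by (simp add: coeff3_def)
lemma coeff3_uminus[simp]: "coeff3 (- S) p q r = - coeff3 S p q r"
  by (simp add: coeff3_def)
lemma coeff3_zero[simp]: "coeff3 0 p q r = 0"
  by (simp add: coeff3_def)
lemma coeff3_sum: "coeff3 (sum f SS) p q r = (\<Sum>x\<in>SS. coeff3 (f x) p q r)"
  by (simp add: coeff3_def fps_sum_nth)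
lemma coeff3_const3_mult[simp]: "coeff3 (const3 x * S) p q r = x * coeff3 S p q r"
  by (simp add: coeff3_def const3_def)
lemma coeff3_U3_mult[simp]: "coeff3 (U3 * S) p q r = (if p = 0 then 0 else coeff3 S (p - 1) q r)"
  by (simp add: coeff3_def U3_def)
lemma coeff3_V3_mult[simp]: "coeff3 (V3 * S) p q r = (if q = 0 then 0 else coeff3 S p (q - 1) r)"
  by (simp add: coeff3_def V3_def)
lemma coeff3_W3_mult[simp]: "coeff3 (W3 * S) p q r = (if r = 0 then 0 else coeff3 S p q (r - 1))"
  by (simp add: coeff3_def W3_def)
lemma coeff3_one: "coeff3 1 p q r = (if p = 0 \<and> q = 0 \<and> r = 0 then 1 else 0)"
  by (simp add: coeff3_def)
lemma coeff3_const3: "coeff3 (const3 x) p q r = (if p = 0 \<and> q = 0 \<and> r = 0 then x else 0)"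
  using coeff3_const3_mult[of x 1 p q r] by (simp add: coeff3_one)
lemma coeff3_U3: "coeff3 U3 p q r = (if p = 1 \<and> q = 0 \<and> r = 0 then 1 else 0)"
  using coeff3_U3_mult[of 1 p q r] by (auto simp: coeff3_one)
lemma coeff3_V3: "coeff3 V3 p q r = (if p = 0 \<and> q = 1 \<and> r = 0 then 1 else 0)"
  using coeff3_V3_mult[of 1 p q r] by (auto simp: coeff3_one)
lemma coeff3_W3: "coeff3 W3 p q r = (if p = 0 \<and> q = 0 \<and> r = 1 then 1 else 0)"
  using coeff3_W3_mult[of 1 p q r] by (auto simp: coeff3_one)

lemma const3_mult: "const3 (x * y) = const3 x * const3 y"
  by (simp add: const3_def)
lemma const3_power: "const3 (x ^ k) = const3 x ^ k"
  by (simp add: const3_def fps_const_power)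
lemma const3_zero[simp]: "const3 0 = 0"
  by (simp add: const3_def)

lemma coeff3_mult: "coeff3 (S * T) p q r =
  (\<Sum>a=0..p. \<Sum>b'=0..q. \<Sum>c=0..r. coeff3 S a b' c * coeff3 T (p - a) (q - b') (r - c))"
  by (simp add: coeff3_def fps_mult_nth fps_sum_nth)

lemma ev_trunc_hom:
  assumes "rh \<phi>" "\<And>x. \<phi> (const3 x) = const3 (h x)"
  shows "\<phi> (ev_trunc N f G H) = ev_trunc N (\<lambda>i j. h (f i j)) (\<phi> G) (\<phi> H)"
  unfolding ev_trunc_def using assms by (simp add: rh.h_sum rh.h_mult rh.h_power)

lemma H3_const3: "rh h \<Longrightarrow> H3 c0 c1 c2 h (const3 x) = const3 (h x)"
  by (rule ext3) (simp add: coeff3_H3 coeff3_const3 rh.h_zero)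

lemma H3_id_U3: "rh h \<Longrightarrow> H3 1 1 1 h U3 = U3"
  by (rule ext3) (simp add: coeff3_H3 coeff3_U3 rh.h_zero rh.h_one)
lemma H3_id_V3: "rh h \<Longrightarrow> H3 1 1 1 h V3 = V3"
  by (rule ext3) (simp add: coeff3_H3 coeff3_V3 rh.h_zero rh.h_one)
lemma H3_id_W3: "rh h \<Longrightarrow> H3 1 1 1 h W3 = W3"
  by (rule ext3) (simp add: coeff3_H3 coeff3_W3 rh.h_zero rh.h_one)

lemma assoc_rel_hom:
  assumes "rh h"
  shows "h (assoc_rel f p q r) = assoc_rel (\<lambda>i j. h (f i j)) p q r"
proof -
  let ?\<phi> = "H3 1 1 1 h"
  have r: "rh ?\<phi>" using assms by (rule rh_H3)
  have c: "\<And>x. ?\<phi> (const3 x) = const3 (h x)" using assms by (rule H3_const3)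
  have "\<And>S. h (coeff3 S p q r) = coeff3 (?\<phi> S) p q r" by (simp add: coeff3_H3)
  then show ?thesis
    unfolding assoc_rel_def Let_def
    using assms by (simp add: rh.h_diff ev_trunc_hom[OF r c] H3_id_U3 H3_id_V3 H3_id_W3)
qed

section \<open>Homogeneity of the associativity relations\<close>

abbreviation T3 :: "'a::comm_ring_1 fps fps fps \<Rightarrow> 'a fps fps fps fps" where
  "T3 \<equiv> H3 fps_X fps_X fps_X fps_const"

lemma coeff3_T3: "coeff3 (T3 S) p q r = fps_const (coeff3 S p q r) * fps_X ^ (p + q + r)"
  by (simp add: coeff3_H3 power_add algebra_simps)

lemma T3_U3: "T3 U3 = const3 fps_X * (U3 :: 'a::comm_ring_1 fps fps fps fps)"
  by (rule ext3) (auto simp: coeff3_T3 coeff3_U3)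
lemma T3_V3: "T3 V3 = const3 fps_X * (V3 :: 'a::comm_ring_1 fps fps fps fps)"
  by (rule ext3) (auto simp: coeff3_T3 coeff3_V3)
lemma T3_W3: "T3 W3 = const3 fps_X * (W3 :: 'a::comm_ring_1 fps fps fps fps)"
  by (rule ext3) (auto simp: coeff3_T3 coeff3_W3)

lemma ev_trunc_scale:
  fixes f :: "nat \<Rightarrow> nat \<Rightarrow> 'a::comm_ring_1"
  assumes f0: "f 0 0 = 0"
  shows "ev_trunc N (\<lambda>i j. fps_const (f i j)) (const3 fps_X * G) (const3 fps_X * H) =
    const3 fps_X * ev_trunc N (\<lambda>i j. fps_const (f i j) * fps_X ^ (i + j - 1)) G H"
  unfolding ev_trunc_def sum_distrib_left
proof (intro sum.cong refl)
  fix i j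
  show "const3 (fps_const (f i j)) * (const3 fps_X * G) ^ i * (const3 fps_X * H) ^ j =
     const3 fps_X * (const3 (fps_const (f i j) * fps_X ^ (i + j - 1)) * G ^ i * H ^ j)"
  proof (cases "i + j = 0")
    case True then show ?thesis using f0 by simp
  next
    case False
    then have eq: "(const3 (fps_X::'a fps) ^ i * const3 fps_X ^ j) = const3 fps_X * const3 fps_X ^ (i + j - 1)"
      by (simp flip: power_add power_Suc)
    have "const3 (fps_const (f i j)) * (const3 fps_X * G) ^ i * (const3 fps_X * H) ^ j
       = const3 (fps_const (f i j)) * (const3 (fps_X::'a fps) ^ i * const3 fps_X ^ j) * G ^ i * H ^ j"
      by (simp add: power_mult_distrib mult_ac)
    also have "\<dots> = const3 (fps_const (f i j)) * (const3 fps_X * const3 fps_X ^ (i + j - 1)) * G ^ i * H ^ j"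
      by (simp only: eq)
    also have "\<dots> = const3 fps_X * (const3 (fps_const (f i j) * fps_X ^ (i + j - 1)) * G ^ i * H ^ j)"
      by (simp add: const3_mult const3_power mult_ac)
    finally show ?thesis .
  qed
qed

lemma assoc_rel_scale:
  fixes f :: "nat \<Rightarrow> nat \<Rightarrow> 'a::comm_ring_1"
  assumes f0: "f 0 0 = 0"
  shows "fps_X * assoc_rel (\<lambda>i j. fps_const (f i j) * fps_X ^ (i + j - 1)) p q r =
     fps_const (assoc_rel f p q r) * fps_X ^ (p + q + r)"
proof -
  let ?f' = "\<lambda>i j. fps_const (f i j) * (fps_X::'a fps) ^ (i + j - 1)"
  let ?N = "p + q + r"
  have r: "rh (T3 :: 'a fps fps fps \<Rightarrow> _)" by (rule rh_H3[OF rh_fps_const])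
  have c: "\<And>x. T3 (const3 x) = const3 (fps_const x)" by (rule H3_const3[OF rh_fps_const])
  note evh = ev_trunc_hom[OF r c]
  note evs = ev_trunc_scale[of f, OF f0]
  have e1: "T3 (ev_trunc ?N f U3 V3) = const3 fps_X * ev_trunc ?N ?f' U3 V3"
    by (simp add: evh T3_U3 T3_V3 evs)
  have e2: "T3 (ev_trunc ?N f V3 W3) = const3 fps_X * ev_trunc ?N ?f' V3 W3"
    by (simp add: evh T3_W3 T3_V3 evs)
  have e3: "T3 (ev_trunc ?N f (ev_trunc ?N f U3 V3) W3) = const3 fps_X * ev_trunc ?N ?f' (ev_trunc ?N ?f' U3 V3) W3"
    unfolding evh[of ?N f "ev_trunc ?N f U3 V3" W3] e1 T3_W3 by (rule evs)
  have e4: "T3 (ev_trunc ?N f U3 (ev_trunc ?N f V3 W3)) = const3 fps_X * ev_trunc ?N ?f' U3 (ev_trunc ?N ?f' V3 W3)"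
    unfolding evh[of ?N f U3 "ev_trunc ?N f V3 W3"] e2 T3_U3 by (rule evs)
  have "fps_const (assoc_rel f p q r) * fps_X ^ ?N =
     coeff3 (T3 (ev_trunc ?N f (ev_trunc ?N f U3 V3) W3)) p q r - coeff3 (T3 (ev_trunc ?N f U3 (ev_trunc ?N f V3 W3))) p q r"
    by (simp add: assoc_rel_def Let_def coeff3_T3 left_diff_distrib flip: fps_const_sub)
  also have "\<dots> = fps_X * assoc_rel ?f' p q r"
    unfolding e3 e4 by (simp add: assoc_rel_def Let_def right_diff_distrib)
  finally show ?thesis by simp
qed

definition ord3 :: "nat \<Rightarrow> 'a::comm_ring_1 fps fps fps \<Rightarrow> bool" where
  "ord3 k S \<longleftrightarrow> (\<forall>p q r. p + q + r < k \<longrightarrow> coeff3 S p q r = 0)"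

lemma ord3_0: "ord3 0 S" by (simp add: ord3_def)
lemma ord3_mono: "ord3 k S \<Longrightarrow> l \<le> k \<Longrightarrow> ord3 l S" by (simp add: ord3_def)
lemma ord3_zero: "ord3 k 0" by (simp add: ord3_def)
lemma ord3_add: "ord3 k S \<Longrightarrow> ord3 k T \<Longrightarrow> ord3 k (S + T)" by (simp add: ord3_def)
lemma ord3_diff: "ord3 k S \<Longrightarrow> ord3 k T \<Longrightarrow> ord3 k (S - T)" by (simp add: ord3_def)
lemma ord3_sum: "(\<And>x. x \<in> SS \<Longrightarrow> ord3 k (f x)) \<Longrightarrow> ord3 k (sum f SS)"
  by (simp add: ord3_def coeff3_sum)
lemma ord3_const3_mult: "ord3 k S \<Longrightarrow> ord3 k (const3 x * S)" by (simp add: ord3_def)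

lemma ord3_mult:
  assumes "ord3 k S" "ord3 l T" shows "ord3 (k + l) (S * T)"
  unfolding ord3_def
proof (intro allI impI)
  fix p q r assume pqr: "p + q + r < k + l"
  show "coeff3 (S * T) p q r = 0"
    unfolding coeff3_mult
  proof (intro sum.neutral ballI)
    fix a b' c assume "a \<in> {0..p}" "b' \<in> {0..q}" "c \<in> {0..r}"
    then have le: "a \<le> p" "b' \<le> q" "c \<le> r" by auto
    show "coeff3 S a b' c * coeff3 T (p - a) (q - b') (r - c) = 0"
    proof (cases "a + b' + c < k")
      case True then show ?thesis using assms(1) by (simp add: ord3_def)
    next
      case False
      then have "(p - a) + (q - b') + (r - c) < l" using pqr le by linarith
      then show ?thesis using assms(2) by (simp add: ord3_def)
    qed
  qed
qed

lemma ord3_power: "ord3 1 S \<Longrightarrow> ord3 i (S ^ i)"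
proof (induction i)
  case 0 show ?case by (rule ord3_0)
next
  case (Suc i) then show ?case using ord3_mult[of 1 S i "S ^ i"] by simp
qed

lemma ord3_U3: "ord3 1 U3" by (simp add: ord3_def coeff3_U3)
lemma ord3_V3: "ord3 1 V3" by (simp add: ord3_def coeff3_V3)
lemma ord3_W3: "ord3 1 W3" by (simp add: ord3_def coeff3_W3)

lemma ord3_ev:
  assumes f0: "f 0 0 = 0" and G: "ord3 1 G" and H: "ord3 1 H"
  shows "ord3 1 (ev_trunc N f G H)"
  unfolding ev_trunc_def
proof (intro ord3_sum)
  fix i j
  show "ord3 1 (const3 (f i j) * G ^ i * H ^ j)"
  proof (cases "i + j = 0")
    case True then show ?thesis using f0 by (simp add: ord3_zero)
  next
    case False
    have o: "ord3 (i + j) (G ^ i * H ^ j)" by (intro ord3_mult ord3_power G H)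
    have "ord3 1 (G ^ i * H ^ j)" by (rule ord3_mono[OF o]) (use False in linarith)
    then show ?thesis using ord3_const3_mult by (simp add: mult.assoc)
  qed
qed

lemma ord3_pow_diff:
  assumes "ord3 1 S" "ord3 1 S'" "ord3 k (S - S')"
  shows "ord3 k (S ^ i - S' ^ i)"
proof (induction i)
  case 0 then show ?case by (simp add: ord3_zero)
next
  case (Suc i)
  have eq: "S ^ Suc i - S' ^ Suc i = S * (S ^ i - S' ^ i) + (S - S') * S' ^ i"
    by (simp add: algebra_simps)
  have 1: "ord3 k (S * (S ^ i - S' ^ i))"
    using ord3_mult[OF assms(1) Suc] by (rule ord3_mono) simp
  have 2: "ord3 k ((S - S') * S' ^ i)"
    using ord3_mult[OF assms(3) ord3_power[OF assms(2)]] by (rule ord3_mono) simp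
  show ?case unfolding eq by (rule ord3_add[OF 1 2])
qed

lemma ev_diff_f:
  assumes eq: "\<And>i j. i + j \<le> N \<Longrightarrow> f i j = g i j" and G: "ord3 1 G" and H: "ord3 1 H"
  shows "ord3 (N + 1) (ev_trunc N f G H - ev_trunc N g G H)"
proof -
  have "ev_trunc N f G H - ev_trunc N g G H =
     (\<Sum>i\<le>N. \<Sum>j\<le>N. const3 (f i j - g i j) * G ^ i * H ^ j)"
    by (simp add: ev_trunc_def sum_subtractf[symmetric] const3_def algebra_simps flip: fps_const_sub)
  also have "ord3 (N + 1) \<dots>"
  proof (intro ord3_sum)
    fix i j
    show "ord3 (N + 1) (const3 (f i j - g i j) * G ^ i * H ^ j)"
    proof (cases "i + j \<le> N")
      case True then show ?thesis using eq by (simp add: ord3_zero)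
    next
      case False
      have o: "ord3 (i + j) (G ^ i * H ^ j)" by (intro ord3_mult ord3_power G H)
      have "ord3 (N + 1) (G ^ i * H ^ j)" by (rule ord3_mono[OF o]) (use False in linarith)
      then show ?thesis using ord3_const3_mult by (simp add: mult.assoc)
    qed
  qed
  finally show ?thesis .
qed

lemma ev_diff_GH:
  assumes G: "ord3 1 G" "ord3 1 G'" "ord3 k (G - G')" and H: "ord3 1 H" "ord3 1 H'" "ord3 k (H - H')"
  shows "ord3 k (ev_trunc N g G H - ev_trunc N g G' H')"
proof -
  have "ev_trunc N g G H - ev_trunc N g G' H' =
     (\<Sum>i\<le>N. \<Sum>j\<le>N. const3 (g i j) * ((G ^ i - G' ^ i) * H ^ j + G' ^ i * (H ^ j - H' ^ j)))"
    by (simp add: ev_trunc_def sum_subtractf[symmetric] algebra_simps)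
  also have "ord3 k \<dots>"
  proof (intro ord3_sum ord3_const3_mult ord3_add)
    fix i j
    show "ord3 k ((G ^ i - G' ^ i) * H ^ j)"
      using ord3_mult[OF ord3_pow_diff[OF G] ord3_power[OF H(1)]] by (rule ord3_mono) simp
    show "ord3 k (G' ^ i * (H ^ j - H' ^ j))"
      using ord3_mult[OF ord3_power[OF G(2)] ord3_pow_diff[OF H]] by (rule ord3_mono) simp
  qed
  finally show ?thesis .
qed

lemma ord3_refl: "ord3 k (S - S)" by (simp add: ord3_zero)

lemma assoc_rel_low:
  assumes f0: "f 0 0 = 0" and g0: "g 0 0 = 0"
    and eq: "\<And>i j. i + j \<le> p + q + r \<Longrightarrow> f i j = g i j"
  shows "assoc_rel f p q r = assoc_rel g p q r"
proof -
  let ?N = "p + q + r"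
  have eUV: "ord3 (?N + 1) (ev_trunc ?N f U3 V3 - ev_trunc ?N g U3 V3)"
    by (rule ev_diff_f[OF eq ord3_U3 ord3_V3])
  have eVW: "ord3 (?N + 1) (ev_trunc ?N f V3 W3 - ev_trunc ?N g V3 W3)"
    by (rule ev_diff_f[OF eq ord3_V3 ord3_W3])
  have o1: "ord3 1 (ev_trunc ?N f U3 V3)" "ord3 1 (ev_trunc ?N g U3 V3)"
     "ord3 1 (ev_trunc ?N f V3 W3)" "ord3 1 (ev_trunc ?N g V3 W3)"
    by (intro ord3_ev f0 g0 ord3_U3 ord3_V3 ord3_W3)+
  have L: "ord3 (?N + 1) (ev_trunc ?N f (ev_trunc ?N f U3 V3) W3 - ev_trunc ?N g (ev_trunc ?N g U3 V3) W3)"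
  proof -
    have a: "ord3 (?N + 1) (ev_trunc ?N f (ev_trunc ?N f U3 V3) W3 - ev_trunc ?N g (ev_trunc ?N f U3 V3) W3)"
      by (rule ev_diff_f[OF eq o1(1) ord3_W3])
    have b: "ord3 (?N + 1) (ev_trunc ?N g (ev_trunc ?N f U3 V3) W3 - ev_trunc ?N g (ev_trunc ?N g U3 V3) W3)"
      by (rule ev_diff_GH[OF o1(1) o1(2) eUV ord3_W3 ord3_W3 ord3_refl])
    show ?thesis using ord3_add[OF a b] by simp
  qed
  have R: "ord3 (?N + 1) (ev_trunc ?N f U3 (ev_trunc ?N f V3 W3) - ev_trunc ?N g U3 (ev_trunc ?N g V3 W3))"
  proof -
    have a: "ord3 (?N + 1) (ev_trunc ?N f U3 (ev_trunc ?N f V3 W3) - ev_trunc ?N g U3 (ev_trunc ?N f V3 W3))"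
      by (rule ev_diff_f[OF eq ord3_U3 o1(3)])
    have b: "ord3 (?N + 1) (ev_trunc ?N g U3 (ev_trunc ?N f V3 W3) - ev_trunc ?N g U3 (ev_trunc ?N g V3 W3))"
      by (rule ev_diff_GH[OF ord3_U3 ord3_U3 ord3_refl o1(3) o1(4) eVW])
    show ?thesis using ord3_add[OF a b] by simp
  qed
  have "coeff3 (ev_trunc ?N f (ev_trunc ?N f U3 V3) W3 - ev_trunc ?N g (ev_trunc ?N g U3 V3) W3) p q r = 0"
    using L by (simp add: ord3_def del: coeff3_diff)
  moreover have "coeff3 (ev_trunc ?N f U3 (ev_trunc ?N f V3 W3) - ev_trunc ?N g U3 (ev_trunc ?N g V3 W3)) p q r = 0"
    using R by (simp add: ord3_def del: coeff3_diff)
  ultimately show ?thesis by (simp add: assoc_rel_def Let_def)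
qed

section \<open>Two-variable series\<close>

lemma ext2: "(\<And>i j. coeff2 S i j = coeff2 T i j) \<Longrightarrow> S = T"
  unfolding coeff2_def by (intro fps_ext) auto

lemma coeff2_add[simp]: "coeff2 (S + T) i j = coeff2 S i j + coeff2 T i j"
  by (simp add: coeff2_def)
lemma coeff2_diff[simp]: "coeff2 (S - T) i j = coeff2 S i j - coeff2 T i j"
  by (simp add: coeff2_def)
lemma coeff2_zero[simp]: "coeff2 0 i j = 0"
  by (simp add: coeff2_def)
lemma coeff2_one: "coeff2 1 i j = (if i = 0 \<and> j = 0 then 1 else 0)"
  by (simp add: coeff2_def)
lemma coeff2_X1_mult[simp]: "coeff2 (X1 * S) i j = (if i = 0 then 0 else coeff2 S (i - 1) j)"
  by (simp add: coeff2_def X1_def)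
lemma coeff2_X2_mult[simp]: "coeff2 (X2 * S) i j = (if j = 0 then 0 else coeff2 S i (j - 1))"
  by (simp add: coeff2_def X2_def)
lemma coeff2_const2_mult[simp]: "coeff2 (fps_const (fps_const (x::'a::comm_ring_1)) * S) i j = x * coeff2 S i j"
  by (simp add: coeff2_def)
lemma coeff2_mult_const2[simp]: "coeff2 (S * fps_const (fps_const (x::'a::comm_ring_1))) i j = coeff2 S i j * x"
  by (simp add: coeff2_def)
lemma coeff2_in_u1[simp]: "coeff2 (in_u1 f) i j = (if j = 0 then f $ i else 0)"
  by (simp add: coeff2_def in_u1_def)
lemma coeff2_in_u2[simp]: "coeff2 (in_u2 f) i j = (if i = 0 then f $ j else 0)"
  by (simp add: coeff2_def in_u2_def)
lemma coeff2_X1: "coeff2 (X1::'a::comm_ring_1 fps fps) i j = (if i = 1 \<and> j = 0 then 1 else 0)"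
  using coeff2_X1_mult[of "1::'a fps fps" i j] by (auto simp: coeff2_one)
lemma coeff2_X2: "coeff2 (X2::'a::comm_ring_1 fps fps) i j = (if i = 0 \<and> j = 1 then 1 else 0)"
  using coeff2_X2_mult[of "1::'a fps fps" i j] by (auto simp: coeff2_one)
lemma coeff2_const2: "coeff2 (fps_const (fps_const x)) i j = (if i = 0 \<and> j = 0 then x else 0)"
  by (simp add: coeff2_def)

lemma coeff2_sc2: "coeff2 (sc (fps_const c1) (sc c0 h) S) i j = h (coeff2 S i j) * c0 ^ j * c1 ^ i"
  by (simp add: coeff2_def fps_const_power)

definition M :: "'a::comm_ring_1 fps \<Rightarrow> 'a fps fps" where
  "M f = Abs_fps (\<lambda>i. Abs_fps (\<lambda>j. f $ (i + j + 1)))"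

lemma coeff2_M[simp]: "coeff2 (M f) i j = f $ (i + j + 1)"
  by (simp add: M_def coeff2_def)

lemma M_prop: "(X1 - X2) * M f = in_u1 f - in_u2 f"
  by (rule ext2) (auto simp: algebra_simps)

definition E :: "'a::comm_ring_1 fps \<Rightarrow> 'a fps fps" where
  "E c = in_u2 c - X2 * M c"

lemma D_factor: "X1 * in_u2 c - X2 * in_u1 c = (X1 - X2) * E c"
proof -
  have "(X1 - X2) * E c = (X1 - X2) * in_u2 c - X2 * ((X1 - X2) * M c)"
    by (simp add: E_def algebra_simps)
  also have "\<dots> = (X1 - X2) * in_u2 c - X2 * (in_u1 c - in_u2 c)"
    unfolding M_prop ..
  also have "\<dots> = X1 * in_u2 c - X2 * in_u1 c"
    by (simp add: algebra_simps)
  finally show ?thesis by simp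
qed

lemma E0: assumes "c $ 0 = 1" shows "E c $ 0 = 1"
proof (rule fps_ext)
  fix n
  show "E c $ 0 $ n = 1 $ n"
    using assms by (cases n) (simp_all add: E_def X2_def M_def in_u2_def)
qed

lemma fps_mult_X_eq0: "g * fps_X = 0 \<Longrightarrow> g = (0::'a::comm_ring_1 fps)"
proof (rule fps_ext)
  fix n assume "g * fps_X = 0"
  then have "(g * fps_X) $ Suc n = 0" by simp
  then show "g $ n = 0 $ n" by simp
qed

lemma fps_X_cancel: "fps_X * u = fps_X * (v::'a::comm_ring_1 fps) \<Longrightarrow> u = v"
proof (rule fps_ext)
  fix n assume "fps_X * u = fps_X * v"
  then have "(fps_X * u) $ Suc n = (fps_X * v) $ Suc n" by simp
  then show "u $ n = v $ n" by simp
qed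

lemma cancel_X12:
  fixes Z :: "'a::comm_ring_1 fps fps"
  assumes "Z * (X1 - X2) = 0" shows "Z = 0"
proof -
  have eq: "(Z * X1) $ i = (Z * X2) $ i" for i
    using assms by (metis right_diff_distrib eq_iff_diff_eq_0)
  have zx: "(Z * X1) $ i = (if i = 0 then 0 else Z $ (i - 1))" for i
    by (simp add: X1_def mult.commute[of Z])
  have zy: "(Z * X2) $ i = Z $ i * fps_X" for i
    by (simp add: X2_def)
  have "Z $ i = 0" for i
  proof (induction i)
    case 0
    have "Z $ 0 * fps_X = 0" using eq[of 0] zx[of 0] zy[of 0] by simp
    then show ?case by (rule fps_mult_X_eq0)
  next
    case (Suc i)
    have "Z $ Suc i * fps_X = 0" using eq[of "Suc i"] zx[of "Suc i"] zy[of "Suc i"] Suc by simp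
    then show ?case by (rule fps_mult_X_eq0)
  qed
  then show ?thesis by (intro fps_ext) simp
qed

lemma unique_D:
  fixes Z :: "'a::comm_ring_1 fps fps"
  assumes c0: "c $ 0 = 1" and Z: "Z * (X1 * in_u2 c - X2 * in_u1 c) = 0"
  shows "Z = 0"
proof -
  let ?Ei = "fps_right_inverse (E c) 1"
  have inv: "E c * ?Ei = 1" by (rule fps_right_inverse) (simp add: E0[OF c0])
  have "Z * (X1 - X2) = Z * (X1 - X2) * (E c * ?Ei)" by (simp add: inv)
  also have "\<dots> = (Z * (X1 * in_u2 c - X2 * in_u1 c)) * ?Ei" by (simp add: D_factor mult_ac)
  also have "\<dots> = 0" using Z by simp
  finally show ?thesis by (rule cancel_X12)
qed

lemma exists_D:
  fixes c d :: "'a::comm_ring_1 fps"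
  assumes c0: "c $ 0 = 1"
  shows "\<exists>Q. Q * (X1 * in_u2 c - X2 * in_u1 c) = in_u1 d - in_u2 d"
proof -
  let ?Ei = "fps_right_inverse (E c) 1"
  have inv: "E c * ?Ei = 1" by (rule fps_right_inverse) (simp add: E0[OF c0])
  have "M d * ?Ei * (X1 * in_u2 c - X2 * in_u1 c) = (X1 - X2) * M d * (E c * ?Ei)"
    by (simp add: D_factor mult_ac)
  also have "\<dots> = in_u1 d - in_u2 d" by (simp add: inv M_prop)
  finally show ?thesis by blast
qed

lemma c_fps0: "c_fps $ 0 = 1" by (simp add: c_fps_def)

lemma Qb_spec: "Qb * (X1 * in_u2 c_fps - X2 * in_u1 c_fps) = in_u1 d_fps - in_u2 d_fps"
proof -
  have ex1: "\<exists>!Q. Q * (X1 * in_u2 c_fps - X2 * in_u1 c_fps) = in_u1 d_fps - in_u2 d_fps"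
  proof (rule ex_ex1I)
    show "\<exists>Q. Q * (X1 * in_u2 c_fps - X2 * in_u1 c_fps) = in_u1 d_fps - in_u2 d_fps"
      by (rule exists_D[OF c_fps0])
  next
    fix Q1 Q2
    assume "Q1 * (X1 * in_u2 c_fps - X2 * in_u1 c_fps) = in_u1 d_fps - in_u2 d_fps"
      and "Q2 * (X1 * in_u2 c_fps - X2 * in_u1 c_fps) = in_u1 d_fps - in_u2 d_fps"
    then have "(Q1 - Q2) * (X1 * in_u2 c_fps - X2 * in_u1 c_fps) = 0"
      by (simp add: left_diff_distrib)
    then have "Q1 - Q2 = 0" by (rule unique_D[OF c_fps0])
    then show "Q1 = Q2" by simp
  qed
  show ?thesis unfolding Qb_def by (rule theI'[OF ex1])
qed

lemma c_fps_nth: "c_fps $ n = (if n = 0 then 1 else if n = 1 then 0 else Var (C (n - 2)))"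
  by (simp add: c_fps_def)
lemma d_fps_nth: "d_fps $ n = (if n = 0 then 0 else Var (D (n - 1)))"
  by (simp add: d_fps_def)

lemma coeff2_Fb: "coeff2 Fb i j = (if i = 1 then c_fps $ j else 0) + (if j = 1 then c_fps $ i else 0)
   - (if i = 1 \<and> j = 1 then Var A else 0) - (if 2 \<le> i \<and> 2 \<le> j then coeff2 Qb (i - 2) (j - 2) else 0)"
proof -
  have eq: "Fb = X1 * in_u2 c_fps + X2 * in_u1 c_fps - fps_const (fps_const (Var A)) * (X1 * (X2 * 1))
     - X1 * (X1 * (X2 * (X2 * Qb)))"
    by (simp add: Fb_def power2_eq_square mult_ac)
  show ?thesis
    unfolding eq by (auto simp: coeff2_one coeff2_X2 numeral_2_eq_2)
qed

lemma coeff2_mult_in_u2: "coeff2 (Q * in_u2 c) i j = (\<Sum>k=0..j. coeff2 Q i k * c $ (j - k))"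
proof -
  have "(Q * fps_const c) $ i = Q $ i * c" by simp
  then show ?thesis unfolding coeff2_def in_u2_def by (simp only: fps_mult_nth)
qed

lemma coeff2_mult_in_u1: "coeff2 (Q * in_u1 c) i j = (\<Sum>k=0..i. coeff2 Q k j * c $ (i - k))"
proof -
  have "(Q * in_u1 c) $ i = (\<Sum>k=0..i. Q $ k * fps_const (c $ (i - k)))"
    by (simp add: fps_mult_nth in_u1_def)
  then show ?thesis unfolding coeff2_def by (simp add: fps_sum_nth)
qed

lemma coeff2_QD: "coeff2 (Q * (X1 * in_u2 c - X2 * in_u1 c)) i j =
   (if i = 0 then 0 else (\<Sum>k=0..j. coeff2 Q (i - 1) k * c $ (j - k)))
 - (if j = 0 then 0 else (\<Sum>k=0..i. coeff2 Q k (j - 1) * c $ (i - k)))"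
proof -
  have "Q * (X1 * in_u2 c - X2 * in_u1 c) = X1 * (Q * in_u2 c) - X2 * (Q * in_u1 c)"
    by (simp add: algebra_simps)
  then show ?thesis by (simp add: coeff2_mult_in_u2 coeff2_mult_in_u1)
qed

lemma Q00: "coeff2 Qb 0 0 = Var (D 0)"
proof -
  have "coeff2 (Qb * (X1 * in_u2 c_fps - X2 * in_u1 c_fps)) 1 0 = coeff2 (in_u1 d_fps - in_u2 d_fps) 1 0"
    by (simp only: Qb_spec)
  then show ?thesis by (simp add: coeff2_QD c_fps_nth d_fps_nth)
qed

lemma Q10: "coeff2 Qb 1 0 = Var (D 1)"
proof -
  have "coeff2 (Qb * (X1 * in_u2 c_fps - X2 * in_u1 c_fps)) 2 0 = coeff2 (in_u1 d_fps - in_u2 d_fps) 2 0"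
    by (simp only: Qb_spec)
  then show ?thesis by (simp add: coeff2_QD c_fps_nth d_fps_nth)
qed

lemma Q01: "coeff2 Qb 0 1 = Var (D 1)"
proof -
  have "coeff2 (Qb * (X1 * in_u2 c_fps - X2 * in_u1 c_fps)) 0 2 = coeff2 (in_u1 d_fps - in_u2 d_fps) 0 2"
    by (simp only: Qb_spec)
  then show ?thesis by (simp add: coeff2_QD c_fps_nth d_fps_nth)
qed

section \<open>Homogeneity of the coefficients of F_b\<close>

definition LR :: "rvar mpoly \<Rightarrow> rvar mpoly fps" where
  "LR = subst (\<lambda>v. fps_const (Var v) * fps_X ^ wtR v)"
definition L1 :: "rvar mpoly fps \<Rightarrow> rvar mpoly fps fps" where "L1 = sc 1 LR"
definition L2 :: "rvar mpoly fps fps \<Rightarrow> rvar mpoly fps fps fps" where "L2 = sc 1 L1"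
definition T1 :: "'a::comm_ring_1 fps \<Rightarrow> 'a fps fps" where "T1 = sc fps_X fps_const"
definition T2 :: "'a::comm_ring_1 fps fps \<Rightarrow> 'a fps fps fps" where "T2 = sc (fps_const fps_X) T1"

lemma rh_LR: "rh LR" unfolding LR_def by (rule rh_subst)
lemma rh_L1: "rh L1" unfolding L1_def by (rule rh_sc[OF rh_LR])
lemma rh_L2: "rh L2" unfolding L2_def by (rule rh_sc[OF rh_L1])
lemma rh_T1: "rh T1" unfolding T1_def by (rule rh_sc[OF rh_fps_const])
lemma rh_T2: "rh T2" unfolding T2_def by (rule rh_sc[OF rh_T1])

lemma LR_Var: "LR (Var v) = fps_const (Var v) * fps_X ^ wtR v"
  by (simp add: LR_def subst_Var)
lemma LR_0[simp]: "LR 0 = 0" by (rule rh.h_zero[OF rh_LR])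
lemma LR_1[simp]: "LR 1 = 1" by (rule rh.h_one[OF rh_LR])

lemma L1_nth[simp]: "L1 f $ n = LR (f $ n)" by (simp add: L1_def)
lemma T1_nth[simp]: "T1 f $ n = fps_const (f $ n) * fps_X ^ n" by (simp add: T1_def)
lemma coeff2_L2[simp]: "coeff2 (L2 S) i j = LR (coeff2 S i j)"
  by (simp add: L2_def coeff2_def)
lemma coeff2_T2[simp]: "coeff2 (T2 S) i j = fps_const (coeff2 S i j) * fps_X ^ (i + j)"
  by (simp add: T2_def coeff2_def fps_const_power power_add mult_ac)

abbreviation cX :: "'a::comm_ring_1 fps fps fps" where "cX \<equiv> fps_const (fps_const fps_X)"

lemma L2_X1: "L2 X1 = X1" by (rule ext2) (simp add: coeff2_X1)
lemma L2_X2: "L2 X2 = X2" by (rule ext2) (simp add: coeff2_X2)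
lemma T2_X1: "T2 X1 = cX * X1" by (rule ext2) (simp add: coeff2_X1)
lemma T2_X2: "T2 X2 = cX * X2" by (rule ext2) (simp add: coeff2_X2)
lemma L2_in_u1: "L2 (in_u1 f) = in_u1 (L1 f)" by (rule ext2) simp
lemma L2_in_u2: "L2 (in_u2 f) = in_u2 (L1 f)" by (rule ext2) simp
lemma T2_in_u1: "T2 (in_u1 f) = in_u1 (T1 f)" by (rule ext2) simp
lemma T2_in_u2: "T2 (in_u2 f) = in_u2 (T1 f)" by (rule ext2) simp
lemma L2_const2: "L2 (fps_const (fps_const x)) = fps_const (fps_const (LR x))"
  by (rule ext2) (simp add: coeff2_const2)
lemma T2_const2: "T2 (fps_const (fps_const x)) = fps_const (fps_const (fps_const x))"
  by (rule ext2) (simp add: coeff2_const2)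
lemma in_u1_const: "in_u1 (fps_const k * g) = fps_const (fps_const k) * in_u1 (g::'a::comm_ring_1 fps)"
  by (rule ext2) simp
lemma in_u2_const: "in_u2 (fps_const k * g) = fps_const (fps_const k) * in_u2 (g::'a::comm_ring_1 fps)"
  by (rule ext2) simp

lemma L1_c: "L1 c_fps = T1 c_fps"
proof (rule fps_ext)
  fix n show "L1 c_fps $ n = T1 c_fps $ n"
  proof (cases "n \<le> 1")
    case True then show ?thesis by (auto simp: c_fps_nth LR_Var le_Suc_eq)
  next
    case False
    then obtain m where m: "n = Suc (Suc m)" by (metis Suc_le_D not_less_eq_eq One_nat_def)
    then show ?thesis by (simp add: c_fps_nth LR_Var)
  qed
qed

lemma L1_d: "L1 d_fps = fps_const (fps_X ^ 2) * T1 d_fps"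
proof (rule fps_ext)
  fix n show "L1 d_fps $ n = (fps_const (fps_X ^ 2) * T1 d_fps) $ n"
    by (cases "n = 0") (auto simp: d_fps_nth LR_Var power2_eq_square mult_ac)
qed

lemma L1_c0: "L1 c_fps $ 0 = 1" by (simp add: c_fps_nth)

lemma L2_Qb: "L2 Qb = T2 Qb * cX ^ 3"
proof -
  interpret L: rh L2 by (rule rh_L2)
  interpret T: rh T2 by (rule rh_T2)
  define Dc where "Dc = X1 * in_u2 c_fps - X2 * in_u1 c_fps"
  define Nd where "Nd = in_u1 d_fps - in_u2 d_fps"
  have hL: "L2 Dc = X1 * in_u2 (L1 c_fps) - X2 * in_u1 (L1 c_fps)"
    by (simp add: Dc_def L.h_diff L.h_mult L2_X1 L2_X2 L2_in_u1 L2_in_u2)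
  have hT': "T2 Dc = cX * (X1 * in_u2 (L1 c_fps) - X2 * in_u1 (L1 c_fps))"
    by (simp add: Dc_def T.h_diff T.h_mult T2_X1 T2_X2 T2_in_u1 T2_in_u2 hL L1_c algebra_simps)
  have hT: "T2 Dc = cX * L2 Dc" by (simp only: hT' hL)
  have hN: "L2 Nd = cX ^ 2 * T2 Nd"
    by (simp add: Nd_def L.h_diff T.h_diff L2_in_u1 L2_in_u2 T2_in_u1 T2_in_u2 L1_d in_u1_const in_u2_const
        right_diff_distrib)
  have QD: "Qb * Dc = Nd" unfolding Dc_def Nd_def by (rule Qb_spec)
  have "(L2 Qb - T2 Qb * cX ^ 3) * L2 Dc = L2 (Qb * Dc) - cX ^ 2 * (T2 Qb * T2 Dc)"
    by (simp add: L.h_mult hT algebra_simps power3_eq_cube power2_eq_square)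
  also have "\<dots> = 0" by (simp add: QD T.h_mult[symmetric] hN)
  finally have "(L2 Qb - T2 Qb * cX ^ 3) * (X1 * in_u2 (L1 c_fps) - X2 * in_u1 (L1 c_fps)) = 0"
    by (simp only: hL[symmetric])
  then have "L2 Qb - T2 Qb * cX ^ 3 = 0" by (rule unique_D[OF L1_c0])
  then show ?thesis by simp
qed

lemma L2_Fb: "L2 Fb * cX = T2 Fb"
proof -
  interpret L: rh L2 by (rule rh_L2)
  interpret T: rh T2 by (rule rh_T2)
  have k: "fps_const (fps_const (LR (Var A))) = fps_const (fps_const (fps_const (Var A))) * cX"
    by (simp add: LR_Var)
  have e1: "L2 Fb = X1 * in_u2 (T1 c_fps) + X2 * in_u1 (T1 c_fps)
      - fps_const (fps_const (fps_const (Var A))) * cX * X1 * X2 - T2 Qb * cX ^ 3 * X1 ^ 2 * X2 ^ 2"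
    unfolding Fb_def
    by (simp add: L.h_diff L.h_add L.h_mult L.h_power L2_X1 L2_X2 L2_in_u1 L2_in_u2 L2_const2 k L1_c L2_Qb)
  have e2: "T2 Fb = cX * X1 * in_u2 (T1 c_fps) + cX * X2 * in_u1 (T1 c_fps)
      - fps_const (fps_const (fps_const (Var A))) * (cX * X1) * (cX * X2) - T2 Qb * (cX * X1) ^ 2 * (cX * X2) ^ 2"
    unfolding Fb_def
    by (simp add: T.h_diff T.h_add T.h_mult T.h_power T2_X1 T2_X2 T2_in_u1 T2_in_u2 T2_const2)
  show ?thesis unfolding e1 e2
    by (simp add: algebra_simps eval_nat_numeral)
qed

lemma b_homog_X: "LR (b i j) * fps_X = fps_const (b i j) * fps_X ^ (i + j)"
proof -
  have "coeff2 (L2 Fb * cX) i j = coeff2 (T2 Fb) i j" by (simp only: L2_Fb)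
  then show ?thesis by (simp add: b_def)
qed

lemma b00: "b 0 0 = 0" by (simp add: b_def coeff2_Fb c_fps_nth)

lemma b_homog: "LR (b i j) = fps_const (b i j) * fps_X ^ (i + j - 1)"
proof (cases "i + j = 0")
  case True then show ?thesis by (simp add: b00)
next
  case False
  have "fps_X ^ (i + j) = fps_X * (fps_X::rvar mpoly fps) ^ (i + j - 1)"
    using False by (simp flip: power_Suc)
  then have "fps_X * LR (b i j) = fps_X * (fps_const (b i j) * fps_X ^ (i + j - 1))"
    using b_homog_X[of i j] by (simp add: mult_ac)
  then show ?thesis by (rule fps_X_cancel)
qed

fun th :: "rvar \<Rightarrow> (nat \<times> nat) mpoly" where
  "th A = - Var (0, 0)"
| "th (C j) = Var (0, j + 1)"
| "th (D k) = - Var (1, k + 1)"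

definition rho_map :: "nat \<times> nat \<Rightarrow> (nat \<times> nat) mpoly" where
  "rho_map v = Var (min (fst v) (snd v), max (fst v) (snd v))"

lemma rh_th: "rh (subst th)" by (rule rh_subst)
lemma rh_rho: "rh (subst rho_map)" by (rule rh_subst)

lemma th_simps: "subst th 0 = 0" "subst th 1 = 1" "subst th (x + y) = subst th x + subst th y"
  "subst th (x - y) = subst th x - subst th y" "subst th (- x) = - subst th x"
  "subst th (Var v) = th v"
  by (simp_all add: rh.h_zero[OF rh_th] rh.h_one[OF rh_th] rh.h_add[OF rh_th] rh.h_diff[OF rh_th]
      rh.h_uminus[OF rh_th] subst_Var)

lemma rho_simps: "subst rho_map 0 = 0" "subst rho_map 1 = 1" "subst rho_map (Var v) = rho_map v"
  by (simp_all add: rh.h_zero[OF rh_rho] rh.h_one[OF rh_rho] subst_Var)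

lemma b_formula: "b i j = (if i = 1 then c_fps $ j else 0) + (if j = 1 then c_fps $ i else 0)
   - (if i = 1 \<and> j = 1 then Var A else 0) - (if 2 \<le> i \<and> 2 \<le> j then coeff2 Qb (i - 2) (j - 2) else 0)"
  by (simp add: b_def coeff2_Fb)

lemma th_b_low:
  assumes "i \<le> 1 \<or> j \<le> 1 \<or> i + j \<le> 5"
  shows "subst th (b i j) = subst rho_map (gL i j)"
proof -
  consider "i = 0" | "j = 0" | "i = 1" "j \<noteq> 0" | "j = 1" "i \<ge> 2" | "i = 2" "j = 2" | "i = 2" "j = 3" | "i = 3" "j = 2"
    using assms by linarith
  then show ?thesis
  proof cases
    case 1 then show ?thesis
      by (cases "j = 1") (simp_all add: b_formula c_fps_nth gL_def th_simps rho_simps)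
  next
    case 2 then show ?thesis
      by (cases "i = 1") (simp_all add: b_formula c_fps_nth gL_def th_simps rho_simps)
  next
    case 3 then show ?thesis
      by (cases "j = 1") (auto simp: b_formula c_fps_nth gL_def th_simps rho_simps rho_map_def Suc_diff_Suc numeral_2_eq_2)
  next
    case 4 then show ?thesis
      by (auto simp: b_formula c_fps_nth gL_def th_simps rho_simps rho_map_def Suc_diff_Suc numeral_2_eq_2)
  next
    case 5 then show ?thesis
      by (simp add: b_formula c_fps_nth gL_def th_simps rho_simps rho_map_def Q00)
  next
    case 6 then show ?thesis
      by (simp add: b_formula c_fps_nth gL_def th_simps rho_simps rho_map_def Q01[unfolded One_nat_def])
  next
    case 7 then show ?thesis
      by (simp add: b_formula c_fps_nth gL_def th_simps rho_simps rho_map_def Q10[unfolded One_nat_def])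
  qed
qed

lemma gL00: "gL 0 0 = 0" by (simp add: gL_def)

lemma rho_map_cong: "rho_map v - Var v \<in> I_Laz"
proof (cases "fst v \<le> snd v")
  case True then show ?thesis by (simp add: rho_map_def gen_ideal_0 I_Laz_def)
next
  case False
  then have "rho_map v - Var v = Var (snd v, fst v) - Var (fst v, snd v)"
    by (simp add: rho_map_def)
  also have "\<dots> \<in> I_Laz" unfolding I_Laz_def by (rule gen_ideal_gen) blast
  finally show ?thesis .
qed

lemma rho_cong: "subst rho_map y - y \<in> I_Laz"
proof -
  have "subst rho_map y - subst Var y \<in> I_Laz"
    unfolding I_Laz_def by (rule subst_cong_ideal) (rule rho_map_cong[unfolded I_Laz_def])
  then show ?thesis by (simp add: subst_Var_id)
qed

lemma assoc_gL_in: "assoc_rel gL p q r \<in> I_Laz"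
  unfolding I_Laz_def by (rule gen_ideal_gen, rule UnI1, rule range_eqI[where x="(p, q, r)"]) simp

lemma th_assoc_low:
  assumes "p + q + r \<le> 5"
  shows "subst th (assoc_rel b p q r) \<in> I_Laz"
proof -
  have "subst th (assoc_rel b p q r) = assoc_rel (\<lambda>i j. subst th (b i j)) p q r"
    by (rule assoc_rel_hom[OF rh_th])
  also have "\<dots> = assoc_rel (\<lambda>i j. subst rho_map (gL i j)) p q r"
    by (rule assoc_rel_low) (use assms in \<open>simp_all add: b00 gL00 th_simps rho_simps th_b_low\<close>)
  also have "\<dots> = subst rho_map (assoc_rel gL p q r)"
    by (rule assoc_rel_hom[OF rh_rho, symmetric])
  finally have eq: "subst th (assoc_rel b p q r) = subst rho_map (assoc_rel gL p q r)" .
  have "subst rho_map (assoc_rel gL p q r) - assoc_rel gL p q r \<in> I_Laz" by (rule rho_cong)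
  then have "subst rho_map (assoc_rel gL p q r) - assoc_rel gL p q r + assoc_rel gL p q r \<in> I_Laz"
    unfolding I_Laz_def by (rule gen_ideal_add) (rule assoc_gL_in[unfolded I_Laz_def])
  then show ?thesis by (simp add: eq)
qed

lemma assoc_rel_000: "f 0 0 = 0 \<Longrightarrow> assoc_rel f 0 0 0 = 0"
  by (simp add: assoc_rel_def ev_trunc_def)

lemma gen_homog:
  "\<exists>k. LR (assoc_rel b p q r) = fps_const (assoc_rel b p q r) * fps_X ^ k
     \<and> (k \<le> 4 \<longrightarrow> subst th (assoc_rel b p q r) \<in> I_Laz)"
proof (cases "p + q + r = 0")
  case True
  then have "assoc_rel b p q r = 0" using assoc_rel_000[of b] b00 by simp
  then show ?thesis by (intro exI[of _ 0]) (simp add: th_simps I_Laz_def gen_ideal_0)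
next
  case False
  let ?N = "p + q + r"
  have "LR (assoc_rel b p q r) = assoc_rel (\<lambda>i j. LR (b i j)) p q r"
    by (rule assoc_rel_hom[OF rh_LR])
  also have "\<dots> = assoc_rel (\<lambda>i j. fps_const (b i j) * fps_X ^ (i + j - 1)) p q r"
    by (simp add: b_homog)
  finally have e: "LR (assoc_rel b p q r) = assoc_rel (\<lambda>i j. fps_const (b i j) * fps_X ^ (i + j - 1)) p q r" .
  have "fps_X * LR (assoc_rel b p q r) = fps_const (assoc_rel b p q r) * fps_X ^ ?N"
    unfolding e by (rule assoc_rel_scale[of b, OF b00])
  also have "\<dots> = fps_X * (fps_const (assoc_rel b p q r) * fps_X ^ (?N - 1))"
  proof -
    have "fps_X ^ ?N = fps_X * (fps_X::rvar mpoly fps) ^ (?N - 1)"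
      using False by (simp flip: power_Suc)
    then show ?thesis by (simp add: mult_ac)
  qed
  finally have "LR (assoc_rel b p q r) = fps_const (assoc_rel b p q r) * fps_X ^ (?N - 1)"
    by (rule fps_X_cancel)
  moreover have "?N - 1 \<le> 4 \<longrightarrow> subst th (assoc_rel b p q r) \<in> I_Laz"
    using th_assoc_low[of p q r] by simp
  ultimately show ?thesis by blast
qed

lemma mon_scaled:
  "mon (\<lambda>v. fps_const (\<beta> v) * fps_X ^ wt v) m =
   fps_const (mon \<beta> m) * fps_X ^ (\<Sum>v\<in>Poly_Mapping.keys m. Poly_Mapping.lookup m v * wt v)"
proof -
  have "mon (\<lambda>v. fps_const (\<beta> v) * fps_X ^ wt v) m =
     (\<Prod>v\<in>Poly_Mapping.keys m. fps_const (\<beta> v ^ Poly_Mapping.lookup m v) * fps_X ^ (Poly_Mapping.lookup m v * wt v))"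
    unfolding mon_def
    by (intro prod.cong refl) (simp add: power_mult_distrib mult.commute flip: power_mult)
  also have "\<dots> = fps_const (mon \<beta> m) * fps_X ^ (\<Sum>v\<in>Poly_Mapping.keys m. Poly_Mapping.lookup m v * wt v)"
    by (simp add: prod.distrib mon_def power_sum rh.h_prod[OF rh_fps_const, symmetric])
  finally show ?thesis .
qed

lemma homog_of_scaled:
  fixes p :: "'v mpoly"
  assumes eq: "subst (\<lambda>v. fps_const (Var v) * fps_X ^ wt v) p = fps_const p * fps_X ^ n"
  shows "homog wt n p"
  unfolding homog_def
proof
  fix m0 assume m0: "m0 \<in> Poly_Mapping.keys p"
  define w where "w m = (\<Sum>v\<in>Poly_Mapping.keys m. Poly_Mapping.lookup m v * wt v)" for m :: "'v \<Rightarrow>\<^sub>0 nat"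
  have L: "subst (\<lambda>v. fps_const (Var v) * fps_X ^ wt v) p =
     (\<Sum>m\<in>Poly_Mapping.keys p. fps_const (Poly_Mapping.single m (Poly_Mapping.lookup p m)) * fps_X ^ w m)"
    unfolding subst_mon mon_scaled w_def
    by (intro sum.cong refl)
       (simp add: mon_Var fps_of_int[symmetric] mult.assoc[symmetric] mult_single flip: single_of_int)
  have nth: "(fps_const x * fps_X ^ k) $ j = (if j = k then x else 0)" for x :: "'v mpoly" and k j
    by (simp add: fps_X_power_mult_right_nth)
  have "Poly_Mapping.lookup ((subst (\<lambda>v. fps_const (Var v) * fps_X ^ wt v) p) $ w m0) m0 =
     (\<Sum>m\<in>Poly_Mapping.keys p. (if m = m0 then Poly_Mapping.lookup p m else 0))"
    unfolding L fps_sum_nth nth lookup_sum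
    by (intro sum.cong refl) (auto simp: lookup_single)
  also have "\<dots> = Poly_Mapping.lookup p m0" using m0 by simp
  finally have "Poly_Mapping.lookup p m0 = Poly_Mapping.lookup ((fps_const p * fps_X ^ n) $ w m0) m0"
    unfolding eq by simp
  also have "\<dots> = (if w m0 = n then Poly_Mapping.lookup p m0 else 0)" by (simp add: nth)
  finally show "(\<Sum>v\<in>Poly_Mapping.keys m0. Poly_Mapping.lookup m0 v * wt v) = n"
    using m0 unfolding w_def by (auto simp: in_keys_iff split: if_splits)
qed

lemma rh_kv: "rh kv" unfolding kv_def by (rule rh_subst)

lemma kv_Var: "kv (Var (i, j)) = b (i + 1) (j + 1)"
  by (simp add: kv_def subst_Var)

lemma kv_th: "wtR v \<le> 4 \<Longrightarrow> kv (th v) = Var v"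
proof (cases v)
  case A then show ?thesis
    by (simp add: rh.h_uminus[OF rh_kv] kv_Var b_formula c_fps_nth)
next
  case (C j) then show ?thesis
    by (simp add: kv_Var b_formula c_fps_nth)
next
  case (D k)
  assume "wtR v \<le> 4"
  then have "k = 0 \<or> k = 1" using D by auto
  then show ?thesis using D
    by (auto simp: rh.h_uminus[OF rh_kv] kv_Var b_formula c_fps_nth Q00 Q01[unfolded One_nat_def])
qed

lemma LL_th: "subst (\<lambda>v. fps_const (Var v) * fps_X ^ wtL v) (th v) = fps_const (th v) * fps_X ^ wtR v"
  by (cases v) (auto simp: rh.h_uminus[OF rh_subst] subst_Var power_add eval_nat_numeral mult_ac
      simp flip: fps_const_neg)

lemma LR_kv:
  assumes "homog wtL n p" shows "LR (kv p) = fps_const (kv p) * fps_X ^ n"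
proof -
  have "LR (kv p) = subst (\<lambda>v. LR (case v of (i, j) \<Rightarrow> b (i + 1) (j + 1))) p"
    unfolding kv_def by (rule rh.h_subst[OF rh_LR])
  also have "\<dots> = subst (\<lambda>v. fps_const (case v of (i, j) \<Rightarrow> b (i + 1) (j + 1)) * fps_X ^ wtL v) p"
    by (intro subst_cong) (auto simp: b_homog)
  also have "\<dots> = fps_const (kv p) * fps_X ^ n"
    unfolding kv_def by (rule subst_scaled_homog[OF assms])
  finally show ?thesis .
qed

lemma nth_mult_monom: "(G * (fps_const s * fps_X ^ k)) $ n = (if k \<le> n then G $ (n - k) * s else 0)"
proof -
  have "G * (fps_const s * fps_X ^ k) = (G * fps_const s) * fps_X ^ k" by (simp add: mult.assoc)
  then show ?thesis by (simp add: fps_X_power_mult_right_nth)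
qed

lemma surj_part:
  assumes n: "n \<le> 4" and q: "homog wtR n q"
  shows "\<exists>p. homog wtL n p \<and> kv p - q \<in> J"
proof (intro exI conjI)
  let ?p = "subst th q"
  have "subst (\<lambda>v. fps_const (Var v) * fps_X ^ wtL v) ?p =
      subst (\<lambda>v. subst (\<lambda>v. fps_const (Var v) * fps_X ^ wtL v) (th v)) q"
    by (rule rh.h_subst[OF rh_subst])
  also have "\<dots> = subst (\<lambda>v. fps_const (th v) * fps_X ^ wtR v) q"
    by (simp add: LL_th)
  also have "\<dots> = fps_const ?p * fps_X ^ n" by (rule subst_scaled_homog[OF q])
  finally show "homog wtL n ?p" by (rule homog_of_scaled)
  have "kv ?p = subst (\<lambda>v. kv (th v)) q" by (rule rh.h_subst[OF rh_kv])
  also have "\<dots> = subst Var q"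
  proof (rule subst_cong)
    fix m v assume "m \<in> Poly_Mapping.keys q" "v \<in> Poly_Mapping.keys m"
    then have "wtR v \<le> n" by (rule homog_var_le[OF q])
    then show "kv (th v) = Var v" using n by (intro kv_th) simp
  qed
  also have "\<dots> = q" by (rule subst_Var_id)
  finally show "kv ?p - q \<in> J" by (simp add: J_def assoc_ideal_def gen_ideal_0)
qed

lemma inj_part:
  assumes n: "n \<le> 4" and p: "homog wtL n p" and kvJ: "kv p \<in> J"
  shows "p \<in> I_Laz"
proof -
  from kvJ obtain F g where F: "finite F" "F \<subseteq> range (\<lambda>(p, q, r). assoc_rel b p q r)"
      and sum: "kv p = (\<Sum>s\<in>F. g s * s)"
    unfolding J_def assoc_ideal_def gen_ideal_def by blast
  have "\<forall>s\<in>F. \<exists>k. LR s = fps_const s * fps_X ^ k \<and> (k \<le> 4 \<longrightarrow> subst th s \<in> I_Laz)"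
  proof
    fix s assume "s \<in> F"
    with F obtain p' q' r' where "s = assoc_rel b p' q' r'" by auto
    then show "\<exists>k. LR s = fps_const s * fps_X ^ k \<and> (k \<le> 4 \<longrightarrow> subst th s \<in> I_Laz)"
      using gen_homog by blast
  qed
  then obtain kk where kk: "\<And>s. s \<in> F \<Longrightarrow> LR s = fps_const s * fps_X ^ kk s"
      "\<And>s. s \<in> F \<Longrightarrow> kk s \<le> 4 \<Longrightarrow> subst th s \<in> I_Laz"
    by metis
  have "kv p = LR (kv p) $ n" by (simp add: LR_kv[OF p])
  also have "\<dots> = (\<Sum>s\<in>F. (LR (g s) * LR s) $ n)"
    by (simp add: sum rh.h_sum[OF rh_LR] rh.h_mult[OF rh_LR] fps_sum_nth)
  also have "\<dots> = (\<Sum>s\<in>F. if kk s \<le> n then LR (g s) $ (n - kk s) * s else 0)"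
    by (intro sum.cong refl) (simp add: kk(1) nth_mult_monom)
  finally have kvp: "kv p = (\<Sum>s\<in>F. if kk s \<le> n then LR (g s) $ (n - kk s) * s else 0)" .
  have th_in: "subst th (kv p) \<in> I_Laz"
    unfolding kvp rh.h_sum[OF rh_th] I_Laz_def
  proof (rule gen_ideal_sum, fold I_Laz_def)
    fix s assume s: "s \<in> F"
    show "subst th (if kk s \<le> n then LR (g s) $ (n - kk s) * s else 0) \<in> I_Laz"
    proof (cases "kk s \<le> n")
      case True
      then have "subst th s \<in> I_Laz" using kk(2)[OF s] n by simp
      then show ?thesis using True
        by (simp add: rh.h_mult[OF rh_th] I_Laz_def gen_ideal_mult)
    next
      case False then show ?thesis by (simp add: th_simps I_Laz_def gen_ideal_0)
    qed
  qed
  have cong: "subst th (kv p) - p \<in> I_Laz"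
  proof -
    have "subst th (kv p) = subst (\<lambda>v. subst th (case v of (i, j) \<Rightarrow> b (i + 1) (j + 1))) p"
      unfolding kv_def by (rule rh.h_subst[OF rh_th])
    moreover have "subst (\<lambda>v. subst th (case v of (i, j) \<Rightarrow> b (i + 1) (j + 1))) p - subst Var p \<in> I_Laz"
      unfolding I_Laz_def
    proof (rule subst_cong_ideal)
      fix m v assume "m \<in> Poly_Mapping.keys p" "v \<in> Poly_Mapping.keys m"
      then have w: "wtL v \<le> n" by (rule homog_var_le[OF p])
      obtain i j where v: "v = (i, j)" by (cases v)
      have "subst th (b (i + 1) (j + 1)) = subst rho_map (gL (i + 1) (j + 1))"
        using w n v by (intro th_b_low) simp
      also have "\<dots> = rho_map (i, j)" by (simp add: gL_def rho_simps)
      finally show "subst th (case v of (i, j) \<Rightarrow> b (i + 1) (j + 1)) - Var v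
          \<in> gen_ideal (range (\<lambda>(p, q, r). assoc_rel gL p q r) \<union> {Var (i, j) - Var (j, i) |i j. True})"
        using rho_map_cong[of v, unfolded I_Laz_def] v by simp
    qed
    ultimately show ?thesis by (simp add: subst_Var_id)
  qed
  have "subst th (kv p) - (subst th (kv p) - p) \<in> I_Laz"
    using th_in cong unfolding I_Laz_def by (rule gen_ideal_diff)
  then show ?thesis by simp
qed

theorem corollary6p2:
  fixes i :: nat
  assumes "2 * i < 10"
  shows "kv_iso_in_degree i"
proof -
  have n: "i \<le> 4" using assms by simp
  show ?thesis unfolding kv_iso_in_degree_def
    using surj_part[OF n] inj_part[OF n] by blast
qed

end
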